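(* Let $k>0$. For any $m$-dimensional bodies $A,B$ with $B\subseteq A$ and $A$ downwards closed, there exists a downwards closed body $\tilde B\subseteq A$ with $\delta_k(\tilde B)\ge\delta_k(B)$.
   Context: An $m$-dimensional body is a compact subset of $\mathbb R_+^m$. A body $A$ is downwards closed if $\mathbf y\in A$ whenever $\mathbf y\in\mathbb R_+^m$ and $\mathbf y\le\mathbf x$ coordinatewise for some $\mathbf x\in A$. The $k$-deficiency is $\delta_k(A)=|A|-k\sum_{j=1}^m|A_{[m]\setminus\{j\}}|$, where $A_{[m]\setminus\{j\}}=\{\mathbf x_{-j}:\mathbf x\in A\}$ and $|\cdot|$ is Lebesgue measure in the relevant dimension. *)

theory Defs
  imports "HOL-Analysis.Analysis"
begin

text \<open>Points of the m-dimensional space are represented as extensional functions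
  on the index set {..<m} (coordinates 0..m-1), i.e. elements of
  PiE {..<m} (\<lambda>_. UNIV); Lebesgue measure on R^I is the product measure
  PiM I (\<lambda>_. lborel).\<close>

definition lebI :: "nat set \<Rightarrow> (nat \<Rightarrow> real) set \<Rightarrow> real" where
  "lebI I S = measure (PiM I (\<lambda>_. lborel)) S"

definition nonneg_orthant :: "nat \<Rightarrow> (nat \<Rightarrow> real) set" where
  "nonneg_orthant m = PiE {..<m} (\<lambda>_. {0..})"

definition body :: "nat \<Rightarrow> (nat \<Rightarrow> real) set \<Rightarrow> bool" where
  "body m A \<longleftrightarrow> compact A \<and> A \<subseteq> nonneg_orthant m"

definition down_closed :: "nat \<Rightarrow> (nat \<Rightarrow> real) set \<Rightarrow> bool" where
  "down_closed m A \<longleftrightarrow>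
     (\<forall>x\<in>A. \<forall>y\<in>nonneg_orthant m. (\<forall>i<m. y i \<le> x i) \<longrightarrow> y \<in> A)"

definition proj_drop :: "nat \<Rightarrow> nat \<Rightarrow> (nat \<Rightarrow> real) set \<Rightarrow> (nat \<Rightarrow> real) set" where
  "proj_drop m j A = (\<lambda>x. restrict x ({..<m} - {j})) ` A"

definition deficiency :: "real \<Rightarrow> nat \<Rightarrow> (nat \<Rightarrow> real) set \<Rightarrow> real" where
  "deficiency k m A =
     lebI {..<m} A - k * (\<Sum>j<m. lebI ({..<m} - {j}) (proj_drop m j A))"

end

theory Submission
  imports Defs
begin

lemma sets_PiM_lborel_of_borel:
  fixes K :: "(nat \<Rightarrow> real) set"
  assumes "K \<in> sets borel" "K \<subseteq> PiE I (\<lambda>_. UNIV)"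
  shows "K \<in> sets (PiM I (\<lambda>_. lborel))"
proof -
  have e: "(\<lambda>x j. (\<lambda>j x. if j \<in> I then x j else undefined) j x) \<in> measurable (PiM I (\<lambda>_. lborel)) (PiM UNIV (\<lambda>_. borel::real measure))"
  proof (rule measurable_PiM_single')
    fix j :: nat
    show "(\<lambda>x. if j \<in> I then x j else undefined) \<in> measurable (PiM I (\<lambda>_. lborel)) (borel::real measure)"
      by (cases "j \<in> I") auto
  qed (auto simp: space_PiM)
  have eq: "\<And>x. x \<in> space (PiM I (\<lambda>_. lborel)) \<Longrightarrow> (\<lambda>j. if j \<in> I then x j else undefined) = x"
    by (auto simp: space_PiM PiE_def extensional_def)
  have K2: "K \<in> sets (PiM UNIV (\<lambda>_. borel::real measure))"
    using assms(1) sets_PiM_equal_borel by blast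
  have "(\<lambda>x j. (\<lambda>j x. if j \<in> I then x j else undefined) j x) -` K \<inter> space (PiM I (\<lambda>_. lborel)) \<in> sets (PiM I (\<lambda>_. lborel))"
    using measurable_sets[OF e K2] .
  also have "(\<lambda>x j. (\<lambda>j x. if j \<in> I then x j else undefined) j x) -` K \<inter> space (PiM I (\<lambda>_. lborel)) = K"
  proof (intro set_eqI iffI)
    fix x assume "x \<in> (\<lambda>x j. (\<lambda>j x. if j \<in> I then x j else undefined) j x) -` K \<inter> space (PiM I (\<lambda>_. lborel))"
    then show "x \<in> K" using eq[of x] by auto
  next
    fix x assume "x \<in> K"
    then have "x \<in> space (PiM I (\<lambda>_. lborel))" using assms(2) by (auto simp: space_PiM)
    then show "x \<in> (\<lambda>x j. (\<lambda>j x. if j \<in> I then x j else undefined) j x) -` K \<inter> space (PiM I (\<lambda>_. lborel))"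
      using eq[of x] \<open>x \<in> K\<close> by auto
  qed
  finally show ?thesis .
qed

lemma cont_upd: "continuous_on UNIV (\<lambda>y::real. (x::nat\<Rightarrow>real)(i:=y))"
  apply (intro continuous_on_coordinatewise_then_product)
  subgoal for j by (cases "j = i") (auto simp: continuous_on_const)
  done

lemma cont_upd2: "continuous_on UNIV (\<lambda>w::nat\<Rightarrow>real. w(i:=c))"
  apply (intro continuous_on_coordinatewise_then_product)
  subgoal for j by (cases "j = i") (auto simp: continuous_on_const)
  done

lemma cont_restrict: "continuous_on UNIV (\<lambda>w::nat\<Rightarrow>real. restrict w J)"
  apply (intro continuous_on_coordinatewise_then_product)
  subgoal for j by (cases "j \<in> J") (auto simp: continuous_on_const)
  done

lemma cont_pair: "continuous_on UNIV (\<lambda>p::(nat\<Rightarrow>real)\<times>real. (fst p)(i:=snd p))"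
proof (intro continuous_on_coordinatewise_then_product)
  fix j
  show "continuous_on UNIV (\<lambda>p::(nat\<Rightarrow>real)\<times>real. ((fst p)(i:=snd p)) j)"
  proof (cases "j = i")
    case True then show ?thesis by (simp add: continuous_on_snd[OF continuous_on_id])
  next
    case False
    have "continuous_on UNIV (\<lambda>p::(nat\<Rightarrow>real)\<times>real. fst p j)"
      using continuous_on_compose[OF continuous_on_fst[OF continuous_on_id] continuous_on_subset[OF continuous_on_product_coordinates[of j]]]
      by (simp add: comp_def)
    then show ?thesis using False by simp
  qed
qed

lemma closed_vimage_UNIV: "continuous_on UNIV f \<Longrightarrow> closed B \<Longrightarrow> closed (f -` B)"
  using continuous_on_closed_vimage[of UNIV f] by auto

lemma compact_fib: 
  fixes K :: "(nat\<Rightarrow>real) set"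
  assumes "compact K" shows "compact {y. x(i:=y) \<in> K}"
proof -
  have "closed ((\<lambda>y::real. x(i:=y)) -` K)"
    by (rule closed_vimage_UNIV[OF cont_upd compact_imp_closed[OF assms]])
  moreover have "{y. x(i:=y) \<in> K} \<subseteq> (\<lambda>w. w i) ` K"
  proof
    fix y assume "y \<in> {y. x(i:=y) \<in> K}"
    then have "x(i:=y) \<in> K" by simp
    then show "y \<in> (\<lambda>w. w i) ` K" by (rule rev_image_eqI) simp
  qed
  moreover have "compact ((\<lambda>w. w i) ` K)"
    by (rule compact_continuous_image[OF _ assms]) (rule continuous_on_subset[OF continuous_on_product_coordinates], simp)
  ultimately show ?thesis
    using bounded_subset compact_eq_bounded_closed unfolding vimage_def by blast
qed


interpretation lb: product_sigma_finite "\<lambda>_::nat. lborel::real measure"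
  by standard

lemma emeasure_compact_finite:
  fixes K :: "(nat \<Rightarrow> real) set"
  assumes N: "finite N" and K: "compact K" "K \<subseteq> PiE N (\<lambda>_. UNIV)"
  shows "emeasure (PiM N (\<lambda>_. lborel)) K < \<infinity>"
proof -
  have "compact (\<Union>j\<in>N. (\<lambda>w. w j) ` K)"
    using N by (intro compact_UN compact_continuous_image[OF _ K(1)] continuous_on_subset[OF continuous_on_product_coordinates]) auto
  then obtain r where r: "\<And>z. z \<in> (\<Union>j\<in>N. (\<lambda>w. w j) ` K) \<Longrightarrow> norm z \<le> r"
    using compact_imp_bounded bounded_iff by metis
  have sub: "K \<subseteq> PiE N (\<lambda>_. {-r..r})"
  proof
    fix w assume w: "w \<in> K"
    have "\<And>j. j \<in> N \<Longrightarrow> w j \<in> {-r..r}"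
      using r[of "w _"] w by (force simp: abs_le_iff)
    then show "w \<in> PiE N (\<lambda>_. {-r..r})" using K(2) w by (auto simp: PiE_iff)
  qed
  have "emeasure (PiM N (\<lambda>_. lborel)) K \<le> emeasure (PiM N (\<lambda>_. lborel)) (PiE N (\<lambda>_. {-r..r}))"
    by (rule emeasure_mono[OF sub]) (use N in auto)
  also have "\<dots> = (\<Prod>j\<in>N. emeasure lborel {-r..r})"
    using N by (subst lb.emeasure_PiM) auto
  also have "\<dots> < \<infinity>"
  proof -
    have "emeasure lborel {-r..r} \<noteq> \<infinity>" by (cases "-r \<le> r") auto
    then show ?thesis by (simp add: less_top[symmetric] power_eq_top_ennreal)
  qed
  finally show ?thesis .
qed

lemma fubini_fib:
  fixes K :: "(nat \<Rightarrow> real) set"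
  assumes I: "finite I" "i \<notin> I" and K: "K \<in> sets (PiM (insert i I) (\<lambda>_. lborel))"
  shows "emeasure (PiM (insert i I) (\<lambda>_. lborel)) K = (\<integral>\<^sup>+x. emeasure lborel {y. x(i:=y) \<in> K} \<partial>PiM I (\<lambda>_. lborel))"
proof -
  have "emeasure (PiM (insert i I) (\<lambda>_. lborel)) K = (\<integral>\<^sup>+x. indicator K x \<partial>PiM (insert i I) (\<lambda>_. lborel))"
    using K by simp
  also have "\<dots> = (\<integral>\<^sup>+x. (\<integral>\<^sup>+y. indicator K (x(i:=y)) \<partial>lborel) \<partial>PiM I (\<lambda>_. lborel))"
    using I K by (subst lb.product_nn_integral_insert) auto
  also have "\<dots> = (\<integral>\<^sup>+x. emeasure lborel {y. x(i:=y) \<in> K} \<partial>PiM I (\<lambda>_. lborel))"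
  proof (rule nn_integral_cong)
    fix x :: "nat \<Rightarrow> real" assume x: "x \<in> space (PiM I (\<lambda>_. lborel))"
    have m: "(\<lambda>y::real. x(i:=y)) -` K \<inter> space lborel \<in> sets lborel"
      using measurable_sets[OF measurable_component_update[OF x I(2)] K] .
    have "(\<integral>\<^sup>+y. indicator K (x(i:=y)) \<partial>lborel) = (\<integral>\<^sup>+y. indicator ((\<lambda>y. x(i:=y)) -` K \<inter> space lborel) y \<partial>lborel)"
      by (auto intro!: nn_integral_cong split: split_indicator)
    also have "\<dots> = emeasure lborel ((\<lambda>y. x(i:=y)) -` K \<inter> space lborel)"
      using m by simp
    finally show "(\<integral>\<^sup>+y. indicator K (x(i:=y)) \<partial>lborel) = emeasure lborel {y. x(i:=y) \<in> K}"
      by (simp add: vimage_def)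
  qed
  finally show ?thesis .
qed


lemma fmeas_U:
  fixes F :: "real set"
  assumes "compact F" "F \<noteq> {}" "\<delta> > 0"
  shows "{y. infdist y F < \<delta>} \<in> fmeasurable lborel"
proof -
  have o: "open {y. infdist y F < \<delta>}"
    by (rule open_Collect_less) (auto intro: continuous_on_infdist continuous_on_id continuous_on_const)
  have "bounded {y. infdist y F \<le> \<delta>}"
    using compact_infdist_le[OF assms(2,1,3)] compact_imp_bounded by blast
  then have "bounded {y. infdist y F < \<delta>}"
    by (rule bounded_subset) auto
  then show ?thesis using o emeasure_bounded_finite
    by (auto simp: fmeasurable_def)
qed

lemma approx_U:
  fixes F :: "real set"
  assumes F: "compact F" "F \<noteq> {}" and e: "\<epsilon> > 0"
  shows "\<exists>\<delta>>0. measure lborel {y. infdist y F < \<delta>} < measure lborel F + \<epsilon>"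
proof -
  define A where "A n = {y. infdist y F < 1 / (real n + 1)}" for n
  have Af: "A n \<in> fmeasurable lborel" for n
    unfolding A_def by (rule fmeas_U[OF F]) simp
  have dec: "decseq A"
  proof (rule decseq_SucI)
    fix n
    have le: "1 / (real (Suc n) + 1) \<le> 1 / (real n + 1)" by (intro divide_left_mono) auto
    show "A (Suc n) \<subseteq> A n"
    proof
      fix y assume "y \<in> A (Suc n)"
      then have "infdist y F < 1 / (real (Suc n) + 1)" unfolding A_def by (rule CollectD)
      then have "infdist y F < 1 / (real n + 1)" using le by linarith
      then show "y \<in> A n" unfolding A_def by (rule CollectI)
    qed
  qed
  have int: "(\<Inter>n. A n) = F"
  proof (intro set_eqI iffI)
    fix y assume "y \<in> (\<Inter>n. A n)"
    then have le: "\<And>n. infdist y F < 1 / (real n + 1)" unfolding A_def by blast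
    have "infdist y F = 0"
    proof (rule ccontr)
      assume "infdist y F \<noteq> 0"
      then have "infdist y F > 0" using infdist_nonneg[of y F] by linarith
      then obtain n where n0: "n > 0" and n: "inverse (real n) < infdist y F"
        using ex_inverse_of_nat_less[of "infdist y F"] by blast
      have "real (n - 1) + 1 = real n" using n0 by (simp add: of_nat_diff)
      then have "1 / (real (n - 1) + 1) = inverse (real n)" by (simp add: inverse_eq_divide)
      then show False using le[of "n - 1"] n by linarith
    qed
    then show "y \<in> F" using in_closed_iff_infdist_zero[OF compact_imp_closed[OF F(1)] F(2)] by blast
  next
    fix y assume y: "y \<in> F"
    show "y \<in> (\<Inter>n. A n)" 
    proof
      fix n 
      have "infdist y F = 0" using y by (rule infdist_zero)
      moreover have "0 < 1 / (real n + 1)" by simp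
      ultimately show "y \<in> A n" unfolding A_def by simp
    qed
  qed
  have "range A \<subseteq> sets lborel" using Af by (auto simp: fmeasurable_def)
  moreover have "emeasure lborel (A n) \<noteq> \<infinity>" for n using Af[of n] by (simp add: fmeasurable_def less_top)
  ultimately have "(\<lambda>n. measure lborel (A n)) \<longlonglongrightarrow> measure lborel (\<Inter>n. A n)"
    using dec by (intro Lim_measure_decseq)
  then have "(\<lambda>n. measure lborel (A n)) \<longlonglongrightarrow> measure lborel F" using int by simp
  moreover have "measure lborel F < measure lborel F + \<epsilon>" using e by simp
  ultimately have "eventually (\<lambda>n. measure lborel (A n) < measure lborel F + \<epsilon>) sequentially"
    by (rule order_tendstoD(2))
  then obtain N where "\<forall>n\<ge>N. measure lborel (A n) < measure lborel F + \<epsilon>"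
    unfolding eventually_sequentially by blast
  then have "measure lborel (A N) < measure lborel F + \<epsilon>" by blast
  moreover have "(0::real) < 1 / (real N + 1)" by simp
  ultimately show ?thesis unfolding A_def by blast
qed

lemma flen_usc:
  fixes K :: "(nat \<Rightarrow> real) set" and X :: "nat \<Rightarrow> nat \<Rightarrow> real"
  assumes K: "compact K" and lim: "X \<longlonglongrightarrow> x" and e: "\<epsilon> > 0"
  shows "eventually (\<lambda>n. measure lborel {y. (X n)(i:=y) \<in> K} \<le> measure lborel {y. x(i:=y) \<in> K} + \<epsilon>) sequentially"
proof -
  define F where "F = {y. x(i:=y) \<in> K}"
  have Fc: "compact F" using compact_fib[OF K] F_def by simp
  obtain \<delta> where d: "\<delta> > 0" and dU: "F \<noteq> {} \<Longrightarrow> measure lborel {y. infdist y F < \<delta>} < measure lborel F + \<epsilon>"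
  proof (cases "F = {}")
    case True show ?thesis by (rule that[of 1]) (use True in simp_all)
  next
    case False then show ?thesis using approx_U[OF Fc False e] that by blast
  qed
  define Q where "Q = K \<inter> {w. F = {} \<or> \<delta> \<le> infdist (w i) F}"
  have "closed {w::nat\<Rightarrow>real. F = {} \<or> \<delta> \<le> infdist (w i) F}"
  proof (cases "F = {}")
    case True then show ?thesis by simp
  next
    case False
    have "closed {w::nat\<Rightarrow>real. \<delta> \<le> infdist (w i) F}"
      by (rule closed_Collect_le[OF continuous_on_const continuous_on_infdist[OF continuous_on_product_coordinates]])
    then show ?thesis using False by simp
  qed
  then have Qc: "compact Q" unfolding Q_def by (rule compact_Int_closed[OF K])
  define H where "H = (\<lambda>w::nat\<Rightarrow>real. w(i:=0)) ` Q"
  have Hc: "closed H" unfolding H_def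
    by (intro compact_imp_closed compact_continuous_image[OF continuous_on_subset[OF cont_upd2] Qc]) simp
  have xH: "x(i:=0) \<notin> H"
  proof
    assume "x(i:=0) \<in> H"
    then obtain w where w: "w \<in> Q" "w(i:=0) = x(i:=0)" unfolding H_def by auto
    have eq: "x(i:= w i) = w"
    proof
      fix j show "(x(i:= w i)) j = w j"
        using fun_cong[OF w(2), of j] by (cases "j = i") auto
    qed
    have "w \<in> K" using w(1) unfolding Q_def by simp
    then have "w i \<in> F" unfolding F_def using eq by simp
    then show False using w(1) d unfolding Q_def by auto
  qed
  have ic: "isCont (\<lambda>w::nat\<Rightarrow>real. w(i:=0)) x"
    using cont_upd2[of i 0] continuous_on_eq_continuous_at[of UNIV] by blast
  have "(\<lambda>n. (X n)(i:=0)) \<longlonglongrightarrow> x(i:=0)"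
    using isCont_tendsto_compose[OF ic lim] .
  then have ev: "eventually (\<lambda>n. (X n)(i:=0) \<in> - H) sequentially"
    using Hc xH by (intro topological_tendstoD) auto
  have "eventually (\<lambda>n. measure lborel {y. (X n)(i:=y) \<in> K} \<le> measure lborel F + \<epsilon>) sequentially"
  proof (rule eventually_mono[OF ev])
    fix n assume n: "(X n)(i:=0) \<in> - H"
    show "measure lborel {y. (X n)(i:=y) \<in> K} \<le> measure lborel F + \<epsilon>"
    proof (cases "F = {}")
      case True
      have "{y. (X n)(i:=y) \<in> K} = {}"
      proof (rule ccontr)
        assume "{y. (X n)(i:=y) \<in> K} \<noteq> {}"
        then obtain y where "(X n)(i:=y) \<in> K" by auto
        then have "(X n)(i:=y) \<in> Q" using True unfolding Q_def by auto
        then have "((X n)(i:=y))(i:=0) \<in> H" unfolding H_def by (rule imageI)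
        then show False using n by simp
      qed
      then show ?thesis using e by simp
    next
      case False
      have sub: "{y. (X n)(i:=y) \<in> K} \<subseteq> {y. infdist y F < \<delta>}"
      proof
        fix y assume "y \<in> {y. (X n)(i:=y) \<in> K}"
        then have yK: "(X n)(i:=y) \<in> K" by simp
        have "(X n)(i:=y) \<notin> Q"
        proof
          assume "(X n)(i:=y) \<in> Q"
          then have "((X n)(i:=y))(i:=0) \<in> H" unfolding H_def by (rule imageI)
          then show False using n by simp
        qed
        then show "y \<in> {y. infdist y F < \<delta>}" using yK False unfolding Q_def by auto
      qed
      have "measure lborel {y. (X n)(i:=y) \<in> K} \<le> measure lborel {y. infdist y F < \<delta>}"
        by (rule measure_mono_fmeasurable[OF sub]) 
           (use compact_fib[OF K] fmeas_U[OF Fc False d] in \<open>auto intro: borel_compact\<close>)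
      then show ?thesis using dU[OF False] by linarith
    qed
  qed
  then show ?thesis unfolding F_def .
qed


definition flen :: "nat \<Rightarrow> (nat \<Rightarrow> real) set \<Rightarrow> (nat \<Rightarrow> real) \<Rightarrow> real" where
  "flen i K x = measure lborel {y. x(i:=y) \<in> K}"

definition compr :: "nat \<Rightarrow> nat \<Rightarrow> (nat \<Rightarrow> real) set \<Rightarrow> (nat \<Rightarrow> real) set" where
  "compr m i S = {x(i:=y) | x y. x \<in> proj_drop m i S \<and> 0 \<le> y \<and> y \<le> flen i S x}"

lemma orth_PiE: "w \<in> nonneg_orthant m \<Longrightarrow> w \<in> PiE {..<m} (\<lambda>_. UNIV)"
  unfolding nonneg_orthant_def by (auto simp: PiE_iff)

lemma upd_eq_iff:
  assumes "x \<in> extensional I" "x' \<in> extensional I" "i \<notin> I"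
  shows "(x(i:=y) = x'(i:=y')) \<longleftrightarrow> (x = x' \<and> y = y')"
proof
  assume h: "x(i:=y) = x'(i:=y')"
  have "y = y'" using fun_cong[OF h, of i] by simp
  moreover have "x = x'"
  proof
    fix j show "x j = x' j"
    proof (cases "j = i")
      case True then show ?thesis using assms by (simp add: extensional_def)
    next
      case False then show ?thesis using fun_cong[OF h, of j] by simp
    qed
  qed
  ultimately show "x = x' \<and> y = y'" by simp
qed simp

lemma restrict_upd: "x \<in> extensional I \<Longrightarrow> i \<notin> I \<Longrightarrow> restrict (x(i:=y)) I = x"
  by (rule ext) (auto simp: extensional_def restrict_def)

lemma restrict_upd_self:
  assumes "w \<in> PiE N (\<lambda>_. UNIV)" "i \<in> N"
  shows "(restrict w (N - {i}))(i := w i) = w"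
proof
  fix j show "((restrict w (N - {i}))(i := w i)) j = w j"
    using assms by (cases "j = i") (auto simp: PiE_iff extensional_def)
qed

lemma proj_ext: "x \<in> proj_drop m i S \<Longrightarrow> x \<in> extensional ({..<m} - {i})"
  unfolding proj_drop_def by auto

lemma compact_proj: "compact S \<Longrightarrow> compact (proj_drop m i S)"
  unfolding proj_drop_def
  by (rule compact_continuous_image[OF continuous_on_subset[OF cont_restrict] ]) auto

lemma fib_nonneg:
  assumes "S \<subseteq> nonneg_orthant m" "i < m" "x(i:=y) \<in> S"
  shows "0 \<le> y"
proof -
  have "x(i:=y) \<in> nonneg_orthant m" using assms by auto
  then have "(x(i:=y)) i \<in> {0..}" using assms(2) unfolding nonneg_orthant_def PiE_iff by blast
  then show ?thesis by simp
qed

lemma flen_nonneg: "0 \<le> flen i S x"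
  unfolding flen_def by simp

lemma fib_empty:
  assumes "x \<in> extensional ({..<m} - {i})" "x \<notin> proj_drop m i S"
  shows "{y. x(i:=y) \<in> S} = {}"
proof (rule ccontr)
  assume "{y. x(i:=y) \<in> S} \<noteq> {}"
  then obtain y where "x(i:=y) \<in> S" by auto
  then have "restrict (x(i:=y)) ({..<m} - {i}) \<in> proj_drop m i S" unfolding proj_drop_def by (rule imageI)
  then show False using assms restrict_upd[OF assms(1), of i y] by simp
qed

lemma comp_fib:
  assumes "x \<in> extensional ({..<m} - {i})"
  shows "{y. x(i:=y) \<in> compr m i S} = (if x \<in> proj_drop m i S then {0..flen i S x} else {})"
proof -
  have "x(i:=y) \<in> compr m i S \<longleftrightarrow> x \<in> proj_drop m i S \<and> 0 \<le> y \<and> y \<le> flen i S x" for y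
  proof
    assume "x(i:=y) \<in> compr m i S"
    then obtain x' y' where h: "x(i:=y) = x'(i:=y')" "x' \<in> proj_drop m i S" "0 \<le> y'" "y' \<le> flen i S x'"
      unfolding compr_def by blast
    then have "x = x' \<and> y = y'" using upd_eq_iff[OF assms proj_ext[OF h(2)]] by simp
    then show "x \<in> proj_drop m i S \<and> 0 \<le> y \<and> y \<le> flen i S x" using h by simp
  next
    assume "x \<in> proj_drop m i S \<and> 0 \<le> y \<and> y \<le> flen i S x"
    then show "x(i:=y) \<in> compr m i S" unfolding compr_def by blast
  qed
  then show ?thesis by (cases "x \<in> proj_drop m i S") (simp_all add: set_eq_iff)
qed

lemma coord_bound:
  fixes S :: "(nat \<Rightarrow> real) set"
  assumes "compact S" obtains R where "R \<ge> 0" "\<And>w. w \<in> S \<Longrightarrow> \<bar>w i\<bar> \<le> R"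
proof -
  have "compact ((\<lambda>w. w i) ` S)"
    by (rule compact_continuous_image[OF continuous_on_subset[OF continuous_on_product_coordinates] assms]) simp
  then obtain a where a: "\<And>z. z \<in> (\<lambda>w. w i) ` S \<Longrightarrow> norm z \<le> a"
    using compact_imp_bounded bounded_iff by metis
  show ?thesis
  proof (rule that[of "max a 0"])
    fix w assume "w \<in> S"
    then have "norm (w i) \<le> a" using a by blast
    then show "\<bar>w i\<bar> \<le> max a 0" by simp
  qed simp
qed

lemma fmeasurable_fib:
  fixes S :: "(nat \<Rightarrow> real) set"
  assumes "compact S" shows "{y. x(i:=y) \<in> S} \<in> fmeasurable lborel"
proof -
  have c: "compact {y. x(i:=y) \<in> S}" by (rule compact_fib[OF assms])
  then have "emeasure lborel {y. x(i:=y) \<in> S} < \<infinity>" using emeasure_bounded_finite compact_imp_bounded by blast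
  moreover have "{y. x(i:=y) \<in> S} \<in> sets lborel" using c by (simp add: borel_compact)
  ultimately show ?thesis by (simp add: fmeasurable_def)
qed

lemma flen_le:
  assumes S: "compact S" "S \<subseteq> nonneg_orthant m" and i: "i < m"
    and R: "\<And>w. w \<in> S \<Longrightarrow> w i \<le> R" and R0: "R \<ge> 0"
  shows "flen i S x \<le> R"
proof -
  have sub: "{y. x(i:=y) \<in> S} \<subseteq> {0..R}"
  proof
    fix y assume "y \<in> {y. x(i:=y) \<in> S}"
    then have h: "x(i:=y) \<in> S" by simp
    have "0 \<le> y" by (rule fib_nonneg[OF S(2) i h])
    moreover have "(x(i:=y)) i \<le> R" using R[OF h] .
    ultimately show "y \<in> {0..R}" by simp
  qed
  have "measure lborel {y. x(i:=y) \<in> S} \<le> measure lborel {0..R}"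
    by (rule measure_mono_fmeasurable[OF sub fmeasurableD[OF fmeasurable_fib[OF S(1)]]]) (metis cbox_interval fmeasurable_cbox)
  then show ?thesis using R0 unfolding flen_def by simp
qed

lemma comp_sub_orth:
  assumes S: "S \<subseteq> nonneg_orthant m" and i: "i < m"
  shows "compr m i S \<subseteq> nonneg_orthant m"
proof
  fix v assume "v \<in> compr m i S"
  then obtain x y where v: "v = x(i:=y)" "x \<in> proj_drop m i S" "0 \<le> y"
    unfolding compr_def by blast
  then obtain w where w: "w \<in> S" "x = restrict w ({..<m} - {i})" unfolding proj_drop_def by blast
  then have "w \<in> PiE {..<m} (\<lambda>_. {0..})" using S unfolding nonneg_orthant_def by blast
  then show "v \<in> nonneg_orthant m" unfolding nonneg_orthant_def using v w i
    by (auto simp: PiE_iff extensional_def)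
qed


lemma comp_closed:
  assumes S: "compact S" "S \<subseteq> nonneg_orthant m" and i: "i < m"
  shows "closed (compr m i S)"
  unfolding closed_sequential_limits
proof (intro allI impI, elim conjE)
  fix f :: "nat \<Rightarrow> nat \<Rightarrow> real" and l
  assume f: "\<forall>n. f n \<in> compr m i S" and lim: "f \<longlonglongrightarrow> l"
  define I where "I = {..<m} - {i}"
  define P where "P = proj_drop m i S"
  define X where "X n = restrict (f n) I" for n
  define Y where "Y n = f n i" for n
  have XY: "f n = (X n)(i := Y n) \<and> X n \<in> P \<and> 0 \<le> Y n \<and> Y n \<le> flen i S (X n)" for n
  proof -
    from f obtain x y where h: "f n = x(i:=y)" "x \<in> P" "0 \<le> y" "y \<le> flen i S x"
      unfolding compr_def P_def by blast
    have xe: "x \<in> extensional I" using proj_ext h(2) unfolding P_def I_def by blast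
    have "X n = x" unfolding X_def h(1) by (rule restrict_upd[OF xe]) (simp add: I_def)
    moreover have "Y n = y" unfolding Y_def h(1) by simp
    ultimately show ?thesis using h by simp
  qed
  define x0 where "x0 = restrict l I"
  have icr: "isCont (\<lambda>w::nat\<Rightarrow>real. restrict w I) l"
    using cont_restrict[of I] continuous_on_eq_continuous_at[of UNIV] by blast
  have Xlim: "X \<longlonglongrightarrow> x0" unfolding X_def x0_def using isCont_tendsto_compose[OF icr lim] .
  have coordlim: "(\<lambda>n. f n j) \<longlonglongrightarrow> l j" for j
  proof -
    have "isCont (\<lambda>w::nat\<Rightarrow>real. w j) l"
      using continuous_on_product_coordinates[of j] continuous_on_eq_continuous_at[of UNIV] by blast
    from isCont_tendsto_compose[OF this lim] show ?thesis .
  qed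
  have Ylim: "Y \<longlonglongrightarrow> l i" unfolding Y_def by (rule coordlim)
  have Pc: "closed P" unfolding P_def by (rule compact_imp_closed[OF compact_proj[OF S(1)]])
  have x0P: "x0 \<in> P"
    using Pc unfolding closed_sequential_limits using XY Xlim by blast
  have li0: "0 \<le> l i"
    by (rule LIMSEQ_le_const[OF Ylim]) (use XY in blast)
  have liL: "l i \<le> flen i S x0"
  proof (rule ccontr)
    assume "\<not> l i \<le> flen i S x0"
    then have e: "(l i - flen i S x0) / 2 > 0" by simp
    have "eventually (\<lambda>n. flen i S (X n) \<le> flen i S x0 + (l i - flen i S x0) / 2) sequentially"
      using flen_usc[OF S(1) Xlim e, of i] unfolding flen_def .
    then have "eventually (\<lambda>n. Y n \<le> flen i S x0 + (l i - flen i S x0) / 2) sequentially"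
      by (rule eventually_mono) (use XY in \<open>meson order_trans\<close>)
    then have "l i \<le> flen i S x0 + (l i - flen i S x0) / 2"
      by (rule tendsto_upperbound[OF Ylim]) simp
    then show False using e by (simp add: field_simps)
  qed
  have undef: "l j = undefined" if "j \<notin> {..<m}" for j
  proof -
    have "f n \<in> nonneg_orthant m" for n using comp_sub_orth[OF S(2) i] f by blast
    then have "f n j = undefined" for n using that unfolding nonneg_orthant_def by (auto simp: PiE_def extensional_def)
    then have "(\<lambda>n. f n j) = (\<lambda>n. undefined)" by simp
    then have "(\<lambda>n. undefined) \<longlonglongrightarrow> l j" using coordlim[of j] by simp
    then show ?thesis using tendsto_const LIMSEQ_unique by metis
  qed
  have "l = x0(i := l i)"
  proof
    fix j show "l j = (x0(i := l i)) j"
      using undef[of j] i by (cases "j = i") (auto simp: x0_def I_def)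
  qed
  then show "l \<in> compr m i S" unfolding compr_def using x0P li0 liL unfolding P_def by blast
qed

lemma comp_compact:
  assumes S: "compact S" "S \<subseteq> nonneg_orthant m" and i: "i < m"
  shows "compact (compr m i S)"
proof -
  obtain R where R0: "R \<ge> 0" and R: "\<And>w. w \<in> S \<Longrightarrow> \<bar>w i\<bar> \<le> R" using coord_bound[OF S(1)] by blast
  have R': "\<And>w. w \<in> S \<Longrightarrow> w i \<le> R" using R by fastforce
  define T where "T = (\<lambda>p::(nat\<Rightarrow>real)\<times>real. (fst p)(i:=snd p)) ` (proj_drop m i S \<times> {0..R})"
  have Tc: "compact T" unfolding T_def
    by (rule compact_continuous_image[OF continuous_on_subset[OF cont_pair]]) (auto intro: compact_Times compact_proj[OF S(1)])
  have sub: "compr m i S \<subseteq> T"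
  proof
    fix v assume "v \<in> compr m i S"
    then obtain x y where v: "v = x(i:=y)" "x \<in> proj_drop m i S" "0 \<le> y" "y \<le> flen i S x"
      unfolding compr_def by blast
    have "flen i S x \<le> R" by (rule flen_le[OF S i]) (use R' R0 in auto)
    then have "y \<le> R" using v(4) by linarith
    then have "(x, y) \<in> proj_drop m i S \<times> {0..R}" using v by simp
    then show "v \<in> T" unfolding T_def v(1) by (rule rev_image_eqI) simp
  qed
  have "compact (T \<inter> compr m i S)" by (rule compact_Int_closed[OF Tc comp_closed[OF S i]])
  moreover have "T \<inter> compr m i S = compr m i S" using sub by blast
  ultimately show ?thesis by simp
qed

lemma comp_sub_A:
  assumes S: "compact S" "S \<subseteq> nonneg_orthant m" and i: "i < m"
    and SA: "S \<subseteq> A" and A: "down_closed m A"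
  shows "compr m i S \<subseteq> A"
proof
  fix v assume vC: "v \<in> compr m i S"
  then obtain x y where v: "v = x(i:=y)" "x \<in> proj_drop m i S" "0 \<le> y" "y \<le> flen i S x"
    unfolding compr_def by blast
  obtain w where w: "w \<in> S" "x = restrict w ({..<m} - {i})" using v(2) unfolding proj_drop_def by blast
  have "x(i := w i) = w" unfolding w(2) by (rule restrict_upd_self[OF orth_PiE]) (use w S i in auto)
  then have "w i \<in> {y. x(i:=y) \<in> S}" using w(1) by simp
  then have Fne: "{y. x(i:=y) \<in> S} \<noteq> {}" by blast
  obtain s where s: "s \<in> {y. x(i:=y) \<in> S}" "\<And>t. t \<in> {y. x(i:=y) \<in> S} \<Longrightarrow> t \<le> s"
    using compact_attains_sup[OF compact_fib[OF S(1)] Fne] by blast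
  have "{y. x(i:=y) \<in> S} \<subseteq> {0..s}"
  proof
    fix t assume t: "t \<in> {y. x(i:=y) \<in> S}"
    then have "0 \<le> t" using fib_nonneg[OF S(2) i] by blast
    then show "t \<in> {0..s}" using s(2)[OF t] by simp
  qed
  then have "flen i S x \<le> measure lborel {0..s}" unfolding flen_def
    by (rule measure_mono_fmeasurable[OF _ fmeasurableD[OF fmeasurable_fib[OF S(1)]]]) (metis cbox_interval fmeasurable_cbox)
  moreover have "0 \<le> s" using fib_nonneg[OF S(2) i] s(1) by blast
  ultimately have ys: "y \<le> s" using v(4) by simp
  have xsA: "x(i:=s) \<in> A" using s(1) SA by blast
  have vO: "v \<in> nonneg_orthant m" using comp_sub_orth[OF S(2) i] vC by blast
  have "\<forall>j<m. v j \<le> (x(i:=s)) j" using ys v(1) by simp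
  then show "v \<in> A" using A xsA vO unfolding down_closed_def by blast
qed


lemma sets_of_compact:
  fixes K :: "(nat \<Rightarrow> real) set"
  assumes "compact K" "K \<subseteq> PiE N (\<lambda>_. UNIV)"
  shows "K \<in> sets (PiM N (\<lambda>_. lborel))"
  by (rule sets_PiM_lborel_of_borel[OF borel_compact[OF assms(1)] assms(2)])

lemma emeasure_fib_flen:
  fixes S :: "(nat \<Rightarrow> real) set"
  assumes "compact S"
  shows "emeasure lborel {y. x(i:=y) \<in> S} = ennreal (flen i S x)"
  unfolding flen_def using fmeasurable_fib[OF assms, of x i]
  by (intro emeasure_eq_ennreal_measure) (auto simp: fmeasurable_def)

lemma emeasure_comp:
  assumes S: "compact S" "S \<subseteq> nonneg_orthant m" and i: "i < m"
  shows "emeasure (PiM {..<m} (\<lambda>_. lborel)) (compr m i S) = emeasure (PiM {..<m} (\<lambda>_. lborel)) S"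
proof -
  define I where "I = {..<m} - {i}"
  have N: "{..<m} = insert i I" "finite I" "i \<notin> I" using i unfolding I_def by auto
  have So: "S \<subseteq> PiE {..<m} (\<lambda>_. UNIV)" using S(2) orth_PiE by blast
  have Co: "compr m i S \<subseteq> PiE {..<m} (\<lambda>_. UNIV)" using comp_sub_orth[OF S(2) i] orth_PiE by blast
  have mS: "S \<in> sets (PiM (insert i I) (\<lambda>_. lborel))" using sets_of_compact[OF S(1) So] N(1) by simp
  have mC: "compr m i S \<in> sets (PiM (insert i I) (\<lambda>_. lborel))"
    using sets_of_compact[OF comp_compact[OF S i] Co] N(1) by simp
  have "emeasure (PiM (insert i I) (\<lambda>_. lborel)) (compr m i S) = emeasure (PiM (insert i I) (\<lambda>_. lborel)) S"
  proof (simp only: fubini_fib[OF N(2,3) mS] fubini_fib[OF N(2,3) mC], rule nn_integral_cong)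
    fix x :: "nat \<Rightarrow> real" assume "x \<in> space (PiM I (\<lambda>_. lborel))"
    then have xe: "x \<in> extensional ({..<m} - {i})" unfolding I_def by (simp add: space_PiM PiE_def)
    have "emeasure lborel {y. x(i:=y) \<in> compr m i S} = ennreal (flen i S x)"
    proof (cases "x \<in> proj_drop m i S")
      case True
      then show ?thesis using comp_fib[OF xe, of S] flen_nonneg[of i S x] by simp
    next
      case False
      then show ?thesis using comp_fib[OF xe, of S] fib_empty[OF xe False] unfolding flen_def by simp
    qed
    then show "emeasure lborel {y. x(i:=y) \<in> compr m i S} = emeasure lborel {y. x(i:=y) \<in> S}"
      using emeasure_fib_flen[OF S(1)] by simp
  qed
  then show ?thesis using N(1) by simp
qed

lemma proj_comp_same:
  assumes S: "compact S" "S \<subseteq> nonneg_orthant m" and i: "i < m"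
  shows "proj_drop m i (compr m i S) = proj_drop m i S"
proof (intro set_eqI iffI)
  fix x assume "x \<in> proj_drop m i (compr m i S)"
  then obtain v where v: "v \<in> compr m i S" "x = restrict v ({..<m} - {i})" unfolding proj_drop_def by blast
  then obtain x' y where h: "v = x'(i:=y)" "x' \<in> proj_drop m i S" unfolding compr_def by blast
  have "x = x'" using v(2) h restrict_upd[OF proj_ext[OF h(2)], of i y] by simp
  then show "x \<in> proj_drop m i S" using h by simp
next
  fix x assume x: "x \<in> proj_drop m i S"
  then have "x(i:=0) \<in> compr m i S" unfolding compr_def using flen_nonneg[of i S x] by blast
  moreover have "restrict (x(i:=0)) ({..<m} - {i}) = x" by (rule restrict_upd[OF proj_ext[OF x]]) simp
  ultimately show "x \<in> proj_drop m i (compr m i S)" unfolding proj_drop_def by (metis imageI)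
qed


lemma proj_comp_le:
  assumes S: "compact S" "S \<subseteq> nonneg_orthant m" and i: "i < m" and j: "j < m" "j \<noteq> i"
  shows "emeasure (PiM ({..<m} - {j}) (\<lambda>_. lborel)) (proj_drop m j (compr m i S))
       \<le> emeasure (PiM ({..<m} - {j}) (\<lambda>_. lborel)) (proj_drop m j S)"
proof -
  define J where "J = {..<m} - {i, j}"
  define N where "N = {..<m} - {j}"
  have NJ: "N = insert i J" "finite J" "i \<notin> J" "i \<in> N" using i j unfolding J_def N_def by auto
  have pe: "proj_drop m j T \<subseteq> PiE N (\<lambda>_. UNIV)" for T unfolding proj_drop_def N_def by (rule image_subsetI) (simp add: PiE_iff)
  have cS: "compact (proj_drop m j S)" by (rule compact_proj[OF S(1)])
  have cC: "compact (proj_drop m j (compr m i S))" by (rule compact_proj[OF comp_compact[OF S i]])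
  have mS: "proj_drop m j S \<in> sets (PiM (insert i J) (\<lambda>_. lborel))"
    using sets_of_compact[OF cS pe] NJ(1) by simp
  have mC: "proj_drop m j (compr m i S) \<in> sets (PiM (insert i J) (\<lambda>_. lborel))"
    using sets_of_compact[OF cC pe] NJ(1) by simp
  have "emeasure (PiM (insert i J) (\<lambda>_. lborel)) (proj_drop m j (compr m i S))
       \<le> emeasure (PiM (insert i J) (\<lambda>_. lborel)) (proj_drop m j S)"
  proof (simp only: fubini_fib[OF NJ(2,3) mS] fubini_fib[OF NJ(2,3) mC], rule nn_integral_mono)
    fix z :: "nat \<Rightarrow> real"
    define M where "M = measure lborel {y. z(i:=y) \<in> proj_drop m j S}"
    have M0: "M \<ge> 0" unfolding M_def by simp
    have sub: "{y. z(i:=y) \<in> proj_drop m j (compr m i S)} \<subseteq> {0..M}"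
    proof
      fix y assume "y \<in> {y. z(i:=y) \<in> proj_drop m j (compr m i S)}"
      then obtain v where v: "v \<in> compr m i S" "z(i:=y) = restrict v N"
        unfolding proj_drop_def N_def by auto
      then obtain x y' where h: "v = x(i:=y')" "x \<in> proj_drop m i S" "0 \<le> y'" "y' \<le> flen i S x"
        unfolding compr_def by blast
      have yy: "y = y'" using fun_cong[OF v(2), of i] NJ(4) h(1) by simp
      have fsub: "{t. x(i:=t) \<in> S} \<subseteq> {t. z(i:=t) \<in> proj_drop m j S}"
      proof
        fix t assume "t \<in> {t. x(i:=t) \<in> S}"
        then have "restrict (x(i:=t)) N \<in> proj_drop m j S" unfolding proj_drop_def N_def by auto
        moreover have "restrict (x(i:=t)) N = z(i:=t)"
        proof
          fix k show "restrict (x(i:=t)) N k = (z(i:=t)) k"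
          proof (cases "k = i")
            case True then show ?thesis using NJ(4) by simp
          next
            case False
            then show ?thesis using fun_cong[OF v(2), of k] h(1) by (simp add: restrict_def)
          qed
        qed
        ultimately show "t \<in> {t. z(i:=t) \<in> proj_drop m j S}" by simp
      qed
      have "flen i S x \<le> M" unfolding flen_def M_def
        by (rule measure_mono_fmeasurable[OF fsub fmeasurableD[OF fmeasurable_fib[OF S(1)]] fmeasurable_fib[OF cS]])
      then show "y \<in> {0..M}" using yy h by simp
    qed
    have "emeasure lborel {y. z(i:=y) \<in> proj_drop m j (compr m i S)} \<le> emeasure lborel {0..M}"
      by (rule emeasure_mono[OF sub]) simp
    also have "\<dots> = ennreal M" using M0 by simp
    also have "\<dots> = emeasure lborel {y. z(i:=y) \<in> proj_drop m j S}"
      unfolding M_def using fmeasurable_fib[OF cS, of z i]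
      by (intro emeasure_eq_ennreal_measure[symmetric]) (auto simp: fmeasurable_def)
    finally show "emeasure lborel {y. z(i:=y) \<in> proj_drop m j (compr m i S)} \<le> emeasure lborel {y. z(i:=y) \<in> proj_drop m j S}" .
  qed
  then show ?thesis using NJ(1) unfolding N_def by simp
qed

lemma lebI_proj_comp_le:
  assumes S: "compact S" "S \<subseteq> nonneg_orthant m" and i: "i < m" and j: "j < m"
  shows "lebI ({..<m} - {j}) (proj_drop m j (compr m i S)) \<le> lebI ({..<m} - {j}) (proj_drop m j S)"
proof (cases "j = i")
  case True then show ?thesis using proj_comp_same[OF S i] by simp
next
  case False
  have pe: "proj_drop m j S \<subseteq> PiE ({..<m} - {j}) (\<lambda>_. UNIV)" unfolding proj_drop_def by (rule image_subsetI) (simp add: PiE_iff)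
  have fin: "emeasure (PiM ({..<m} - {j}) (\<lambda>_. lborel)) (proj_drop m j S) < \<infinity>"
    by (rule emeasure_compact_finite[OF _ compact_proj[OF S(1)] pe]) simp
  show ?thesis unfolding lebI_def measure_def
    using enn2real_mono[OF proj_comp_le[OF S i j False]] fin by (simp add: top_unique less_top)
qed

lemma deficiency_comp:
  assumes k: "k > 0" and S: "compact S" "S \<subseteq> nonneg_orthant m" and i: "i < m"
  shows "deficiency k m S \<le> deficiency k m (compr m i S)"
proof -
  have v: "lebI {..<m} (compr m i S) = lebI {..<m} S"
    unfolding lebI_def measure_def using emeasure_comp[OF S i] by simp
  have "(\<Sum>j<m. lebI ({..<m} - {j}) (proj_drop m j (compr m i S))) \<le> (\<Sum>j<m. lebI ({..<m} - {j}) (proj_drop m j S))"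
    by (rule sum_mono) (use lebI_proj_comp_le[OF S i] in auto)
  then have "k * (\<Sum>j<m. lebI ({..<m} - {j}) (proj_drop m j (compr m i S))) \<le> k * (\<Sum>j<m. lebI ({..<m} - {j}) (proj_drop m j S))"
    using k by (intro mult_left_mono) auto
  then show ?thesis unfolding deficiency_def using v by linarith
qed


definition dcc :: "nat \<Rightarrow> (nat \<Rightarrow> real) set \<Rightarrow> bool" where
  "dcc j S \<longleftrightarrow> (\<forall>x\<in>S. \<forall>t. 0 \<le> t \<and> t \<le> x j \<longrightarrow> x(j:=t) \<in> S)"

lemma dcc_comp_self: "dcc i (compr m i S)"
  unfolding dcc_def
proof (intro ballI allI impI)
  fix v t assume v: "v \<in> compr m i S" and t: "0 \<le> t \<and> t \<le> v i"
  then obtain x y where h: "v = x(i:=y)" "x \<in> proj_drop m i S" "0 \<le> y" "y \<le> flen i S x"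
    unfolding compr_def by blast
  have "v(i:=t) = x(i:=t)" using h(1) by simp
  moreover have "t \<le> flen i S x" using t h by simp
  ultimately show "v(i:=t) \<in> compr m i S" unfolding compr_def using h(2) t by blast
qed

lemma dcc_comp_other:
  assumes S: "compact S" "S \<subseteq> nonneg_orthant m" and i: "i < m" and j: "j < m" "j \<noteq> i"
    and d: "dcc j S"
  shows "dcc j (compr m i S)"
  unfolding dcc_def
proof (intro ballI allI impI)
  fix v t assume v: "v \<in> compr m i S" and t: "0 \<le> t \<and> t \<le> v j"
  then obtain x y where h: "v = x(i:=y)" "x \<in> proj_drop m i S" "0 \<le> y" "y \<le> flen i S x"
    unfolding compr_def by blast
  obtain w where w: "w \<in> S" "x = restrict w ({..<m} - {i})" using h(2) unfolding proj_drop_def by blast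
  have jI: "j \<in> {..<m} - {i}" using j by simp
  have xj: "x j = w j" using w(2) jI by simp
  have tx: "t \<le> x j" using t h(1) j(2) by simp
  have "w(j:=t) \<in> S" using d w(1) t tx xj unfolding dcc_def by auto
  moreover have "restrict (w(j:=t)) ({..<m} - {i}) = x(j:=t)"
    using w(2) jI by (auto simp: restrict_def)
  ultimately have xt: "x(j:=t) \<in> proj_drop m i S" unfolding proj_drop_def by (metis imageI)
  have fsub: "{s. x(i:=s) \<in> S} \<subseteq> {s. (x(j:=t))(i:=s) \<in> S}"
  proof
    fix s assume "s \<in> {s. x(i:=s) \<in> S}"
    then have xs: "x(i:=s) \<in> S" by simp
    have "(x(i:=s))(j:=t) \<in> S" using d xs t tx j(2) unfolding dcc_def by auto
    moreover have "(x(i:=s))(j:=t) = (x(j:=t))(i:=s)" using j(2) by (metis fun_upd_twist)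
    ultimately show "s \<in> {s. (x(j:=t))(i:=s) \<in> S}" by simp
  qed
  have "flen i S x \<le> flen i S (x(j:=t))" unfolding flen_def
    by (rule measure_mono_fmeasurable[OF fsub fmeasurableD[OF fmeasurable_fib[OF S(1)]] fmeasurable_fib[OF S(1)]])
  then have "y \<le> flen i S (x(j:=t))" using h(4) by linarith
  moreover have "v(j:=t) = (x(j:=t))(i:=y)" using h(1) j(2) by (simp add: fun_upd_twist)
  ultimately show "v(j:=t) \<in> compr m i S" unfolding compr_def using xt h(3) by blast
qed

lemma dcc_down_closed:
  assumes S: "S \<subseteq> nonneg_orthant m" and d: "\<And>j. j < m \<Longrightarrow> dcc j S"
  shows "down_closed m S"
  unfolding down_closed_def
proof (intro ballI impI)
  fix x y assume x: "x \<in> S" and y: "y \<in> nonneg_orthant m" and le: "\<forall>i<m. y i \<le> x i"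
  define z where "z n = (\<lambda>j. if j < n then y j else x j)" for n
  have "n \<le> m \<Longrightarrow> z n \<in> S" for n
  proof (induction n)
    case 0
    have "z 0 = x" unfolding z_def by simp
    then show ?case using x by simp
  next
    case (Suc n)
    then have zn: "z n \<in> S" by simp
    have n: "n < m" using Suc.prems by simp
    have "0 \<le> y n" using y n unfolding nonneg_orthant_def by (auto simp: PiE_iff)
    moreover have "y n \<le> z n n" using le n unfolding z_def by simp
    ultimately have "(z n)(n := y n) \<in> S" using d[OF n] zn unfolding dcc_def by blast
    moreover have "(z n)(n := y n) = z (Suc n)" unfolding z_def by (rule ext) auto
    ultimately show ?case by simp
  qed
  then have "z m \<in> S" by simp
  moreover have "z m = y"
  proof
    fix j show "z m j = y j"
    proof (cases "j < m")
      case True then show ?thesis unfolding z_def by simp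
    next
      case False
      have "x \<in> nonneg_orthant m" using x S by blast
      then have "x j = undefined" using False unfolding nonneg_orthant_def by (auto simp: PiE_def extensional_def)
      moreover have "y j = undefined" using y False unfolding nonneg_orthant_def by (auto simp: PiE_def extensional_def)
      ultimately show ?thesis unfolding z_def using False by simp
    qed
  qed
  ultimately show "y \<in> S" by simp
qed

primrec iter :: "nat \<Rightarrow> nat \<Rightarrow> (nat \<Rightarrow> real) set \<Rightarrow> (nat \<Rightarrow> real) set" where
  "iter m 0 B = B"
| "iter m (Suc n) B = compr m n (iter m n B)"

lemma iter_props:
  assumes k: "k > 0" and B: "body m B" "B \<subseteq> A" and A: "down_closed m A"
  shows "n \<le> m \<Longrightarrow> body m (iter m n B) \<and> iter m n B \<subseteq> A \<and> (\<forall>j<n. dcc j (iter m n B))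
          \<and> deficiency k m B \<le> deficiency k m (iter m n B)"
proof (induction n)
  case 0 then show ?case using B by simp
next
  case (Suc n)
  define S where "S = iter m n B"
  have IH: "body m S" "S \<subseteq> A" "\<forall>j<n. dcc j S" "deficiency k m B \<le> deficiency k m S"
    using Suc by (auto simp: S_def)
  have Sc: "compact S" "S \<subseteq> nonneg_orthant m" using IH(1) unfolding body_def by auto
  have n: "n < m" using Suc.prems by simp
  have "body m (compr m n S)" unfolding body_def using comp_compact[OF Sc n] comp_sub_orth[OF Sc(2) n] by simp
  moreover have "compr m n S \<subseteq> A" by (rule comp_sub_A[OF Sc n IH(2) A])
  moreover have "\<forall>j<Suc n. dcc j (compr m n S)"
  proof (intro allI impI)
    fix j assume "j < Suc n"
    then show "dcc j (compr m n S)"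
    proof (cases "j = n")
      case True then show ?thesis using dcc_comp_self by simp
    next
      case False
      then have "j < n" using \<open>j < Suc n\<close> by simp
      then show ?thesis using dcc_comp_other[OF Sc n _ False] IH(3) n by simp
    qed
  qed
  moreover have "deficiency k m B \<le> deficiency k m (compr m n S)"
    using IH(4) deficiency_comp[OF k Sc n] by linarith
  ultimately show ?case unfolding S_def by simp
qed

theorem lemma5:
  fixes k :: real and m :: nat and A B :: "(nat \<Rightarrow> real) set"
  assumes "k > 0"
    and "body m A" and "body m B" and "B \<subseteq> A" and "down_closed m A"
  shows "\<exists>B'. body m B' \<and> down_closed m B' \<and> B' \<subseteq> A \<and>
           deficiency k m B' \<ge> deficiency k m B"
proof -
  have h: "body m (iter m m B) \<and> iter m m B \<subseteq> A \<and> (\<forall>j<m. dcc j (iter m m B))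
          \<and> deficiency k m B \<le> deficiency k m (iter m m B)"
    using iter_props[OF assms(1,3,4,5)] by simp
  then have "down_closed m (iter m m B)"
    by (intro dcc_down_closed) (auto simp: body_def)
  then show ?thesis using h by blast
qed

end
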